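(* Let $\sigma_0,\sigma_\epsilon,\sigma_1,\dots,\sigma_k>0$, $\Delta_1,\dots,\Delta_k\in\mathbb{R}$, and weights $\phi_\epsilon>0$, $\phi_1,\dots,\phi_k\ge0$ with $\phi_\epsilon+\sum_i\phi_i=1$. Let the prior be $\Theta\sim N(0,\sigma_0^2)$ and the signal likelihood be the Gaussian mixture $$l_{X|\Theta}(x\mid\theta)=\phi_\epsilon\,\varphi(x;\theta,\sigma_\epsilon^2)+\sum_{i=1}^k\phi_i\,\varphi(x;\Delta_i,\sigma_i^2),$$ where $\varphi(x;\mu,s^2)$ is the $N(\mu,s^2)$ density. Let $\theta_1(x)$ be the posterior mean of $\Theta$ given $X=x$. Then the DeGroot coefficient $\omega_m=\frac{d\theta_1}{dx}\big|_{x=0}$ is $$\omega_m=\frac{\omega_{nm}}{1+\sum_{i=1}^k\frac{\phi_i}{\phi_\epsilon}\frac{\sqrt{\sigma_0^2+\sigma_\epsilon^2}}{\sigma_i}\exp\!\bigl(-\frac{\Delta_i^2}{2\sigma_i^2}\bigr)},\qquad \omega_{nm}=\frac{\sigma_0^2}{\sigma_0^2+\sigma_\epsilon^2}.$$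
   Context: The posterior mean is $\theta_1(x)=\frac{\int\theta f_\Theta(\theta)l_{X|\Theta}(x\mid\theta)d\theta}{\int f_\Theta(\theta)l_{X|\Theta}(x\mid\theta)d\theta}$ with $f_\Theta$ the $N(0,\sigma_0^2)$ density. *)

theory Defs
  imports "HOL-Probability.Probability"
begin

definition mix_lik ::
  "real \<Rightarrow> real \<Rightarrow> nat \<Rightarrow> (nat \<Rightarrow> real) \<Rightarrow> (nat \<Rightarrow> real) \<Rightarrow> (nat \<Rightarrow> real)
   \<Rightarrow> real \<Rightarrow> real \<Rightarrow> real" where
  "mix_lik phi_eps sig_eps k phi sig Delta x \<theta> =
     phi_eps * normal_density \<theta> sig_eps x
     + (\<Sum>i=1..k. phi i * normal_density (Delta i) (sig i) x)"

definition post_mean ::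
  "real \<Rightarrow> real \<Rightarrow> real \<Rightarrow> nat \<Rightarrow> (nat \<Rightarrow> real) \<Rightarrow> (nat \<Rightarrow> real) \<Rightarrow> (nat \<Rightarrow> real)
   \<Rightarrow> real \<Rightarrow> real" where
  "post_mean sig0 phi_eps sig_eps k phi sig Delta x =
     (\<integral>\<theta>. \<theta> * normal_density 0 sig0 \<theta> * mix_lik phi_eps sig_eps k phi sig Delta x \<theta> \<partial>lborel)
     / (\<integral>\<theta>. normal_density 0 sig0 \<theta> * mix_lik phi_eps sig_eps k phi sig Delta x \<theta> \<partial>lborel)"

end

theory Submission
  imports Defs
begin

lemma exp_combine:
  fixes p1 p2 p3 p4 e1 e2 e3 e4 :: real
  assumes "p1 * p2 = p3 * p4" "e1 + e2 = e3 + e4"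
  shows "(p1 * exp e1) * (p2 * exp e2) = (p3 * exp e3) * (p4 * exp e4)"
proof -
  have "(p1 * exp e1) * (p2 * exp e2) = (p1 * p2) * exp (e1 + e2)" by (simp add: exp_add)
  also have "\<dots> = (p3 * p4) * exp (e3 + e4)" using assms by simp
  also have "\<dots> = (p3 * exp e3) * (p4 * exp e4)" by (simp add: exp_add)
  finally show ?thesis .
qed

lemma prod_gauss:
  fixes a b x th :: real
  assumes "a > 0" "b > 0"
  shows "normal_density 0 a th * normal_density th b x =
    normal_density 0 (sqrt (a^2 + b^2)) x *
    normal_density (a^2 * x / (a^2 + b^2)) (a * b / sqrt (a^2 + b^2)) th"
proof -
  define V where "V = a^2 + b^2"
  have V: "V > 0" using assms by (simp add: V_def add_pos_pos)
  have e: "-(th - 0)\<^sup>2/(2* a\<^sup>2) + -(x - th)\<^sup>2/(2* b\<^sup>2) =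
     -(x - 0)\<^sup>2/(2*(sqrt V)\<^sup>2) + -(th - a^2*x/V)\<^sup>2/(2*(a* b/sqrt V)\<^sup>2)"
  proof -
    have sq: "(sqrt V)\<^sup>2 = V" using V by simp
    define D where "D = 2 * a^2 * b^2 * V"
    have D: "D > 0" using assms V by (simp add: D_def)
    have l: "-(th - 0)\<^sup>2/(2 * a\<^sup>2) + -(x - th)\<^sup>2/(2 * b\<^sup>2) = -(th^2 * b^2 * V + (x-th)^2 * a^2 * V)/D"
      unfolding D_def using assms V by (simp add: field_simps)
    have r: "-(x - 0)\<^sup>2/(2*(sqrt V)\<^sup>2) + -(th - a^2*x/V)\<^sup>2/(2*(a * b/sqrt V)\<^sup>2)
       = -(x^2 * a^2 * b^2 + (th*V - a^2*x)^2)/D"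
    proof -
      have "th - a^2*x/V = (th*V - a^2*x)/V" using V by (simp add: field_simps)
      then have "-(x - 0)\<^sup>2/(2*(sqrt V)\<^sup>2) + -(th - a^2*x/V)\<^sup>2/(2*(a * b/sqrt V)\<^sup>2)
        = -(x^2)/(2*V) + -((th*V - a^2*x)^2/V^2)/(2*a^2*b^2/V)"
        by (simp add: power_mult_distrib power_divide sq)
      also have "\<dots> = -(x^2 * a^2 * b^2 + (th*V - a^2*x)^2)/D"
        unfolding D_def using assms V by (simp add: field_simps power2_eq_square)
      finally show ?thesis .
    qed
    have n: "th^2 * b^2 * V + (x-th)^2 * a^2 * V = x^2 * a^2 * b^2 + (th*V - a^2*x)^2"
      unfolding V_def by algebra
    show ?thesis using l r n by simp
  qed
  have p: "1 / sqrt (2*pi* a\<^sup>2) * (1 / sqrt (2*pi* b\<^sup>2)) =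
      1 / sqrt (2*pi*(sqrt V)\<^sup>2) * (1 / sqrt (2*pi*(a* b/sqrt V)\<^sup>2))"
  proof -
    have "sqrt (2*pi* a\<^sup>2) * sqrt (2*pi* b\<^sup>2) = sqrt (2*pi*(sqrt V)\<^sup>2) * sqrt (2*pi*(a* b/sqrt V)\<^sup>2)"
      unfolding real_sqrt_mult[symmetric] using V by (simp add: field_simps power2_eq_square)
    then show ?thesis by (simp add: divide_simps)
  qed
  show ?thesis
    unfolding normal_density_def V_def[symmetric]
    by (rule exp_combine[OF p e])
qed

lemma closed_forms:
  fixes a b pe x :: real and k :: nat and phi sig Delta :: "nat \<Rightarrow> real"
  assumes "a > 0" "b > 0"
  defines "V \<equiv> a^2 + b^2"
  defines "S \<equiv> (\<Sum>i=1..k. phi i * normal_density (Delta i) (sig i) x)"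
  shows "(\<integral>\<theta>. \<theta> * normal_density 0 a \<theta> * mix_lik pe b k phi sig Delta x \<theta> \<partial>lborel)
           = pe * normal_density 0 (sqrt V) x * (a^2 * x / V)"
    and "(\<integral>\<theta>. normal_density 0 a \<theta> * mix_lik pe b k phi sig Delta x \<theta> \<partial>lborel)
           = pe * normal_density 0 (sqrt V) x + S"
proof -
  define g where "g = normal_density 0 (sqrt V) x"
  define m where "m = a^2 * x / V"
  define t where "t = a * b / sqrt V"
  have tpos: "t > 0" using assms(1,2) unfolding t_def V_def by (simp add: add_pos_pos)
  have pg: "normal_density 0 a th * normal_density th b x = g * normal_density m t th" for th
    using prod_gauss[OF assms(1,2), of th x] unfolding g_def m_def t_def V_def by simp
  have ml: "mix_lik pe b k phi sig Delta x th = pe * normal_density th b x + S" for th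
    unfolding mix_lik_def S_def by simp
  have "(\<lambda>\<theta>. \<theta> * normal_density 0 a \<theta> * mix_lik pe b k phi sig Delta x \<theta>)
     = (\<lambda>\<theta>. pe * g * (normal_density m t \<theta> * \<theta>) + S * (normal_density 0 a \<theta> * \<theta>))"
  proof
    fix th
    show "th * normal_density 0 a th * mix_lik pe b k phi sig Delta x th
      = pe * g * (normal_density m t th * th) + S * (normal_density 0 a th * th)"
      unfolding ml using pg[of th] by (simp add: algebra_simps)
  qed
  moreover have "(\<integral>\<theta>. pe * g * (normal_density m t \<theta> * \<theta>) + S * (normal_density 0 a \<theta> * \<theta>) \<partial>lborel)
     = pe * g * m"
    by (subst Bochner_Integration.integral_add) (auto intro!: integrable_mult_right integrable_normal_moment_nz_1
         simp: integral_normal_moment_nz_1[OF tpos] integral_normal_moment_nz_1[OF assms(1)] tpos assms(1))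
  ultimately show "(\<integral>\<theta>. \<theta> * normal_density 0 a \<theta> * mix_lik pe b k phi sig Delta x \<theta> \<partial>lborel)
           = pe * normal_density 0 (sqrt V) x * (a^2 * x / V)" by (simp add: g_def m_def)
  have "(\<lambda>\<theta>. normal_density 0 a \<theta> * mix_lik pe b k phi sig Delta x \<theta>)
     = (\<lambda>\<theta>. pe * g * normal_density m t \<theta> + S * normal_density 0 a \<theta>)"
  proof
    fix th
    show "normal_density 0 a th * mix_lik pe b k phi sig Delta x th
      = pe * g * normal_density m t th + S * normal_density 0 a th"
      unfolding ml using pg[of th] by (simp add: algebra_simps)
  qed
  moreover have "(\<integral>\<theta>. pe * g * normal_density m t \<theta> + S * normal_density 0 a \<theta> \<partial>lborel)
     = pe * g + S"
    by (subst Bochner_Integration.integral_add) (auto simp: tpos assms(1))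
  ultimately show "(\<integral>\<theta>. normal_density 0 a \<theta> * mix_lik pe b k phi sig Delta x \<theta> \<partial>lborel)
           = pe * normal_density 0 (sqrt V) x + S" by (simp add: g_def)
qed

lemma isCont_normal_density[continuous_intros]:
  "isCont (normal_density \<mu> \<sigma>) x0"
proof (cases "\<sigma> = 0")
  case True
  then show ?thesis by (simp add: normal_density_def[abs_def])
next
  case False
  then show ?thesis unfolding normal_density_def[abs_def]
    by (intro continuous_intros) auto
qed

lemma ratio_alg:
  fixes P Q c :: real
  assumes "P > 0" "Q \<ge> 0"
  shows "P * c / (P + Q) = c / (1 + Q / P)"
proof -
  have "1 + Q / P = (P + Q) / P" using assms by (simp add: field_simps)
  then show ?thesis using assms by simp
qed

theorem mainTheorem10:
  fixes sig0 sig_eps phi_eps :: real and k :: nat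
    and phi sig Delta :: "nat \<Rightarrow> real"
  assumes "sig0 > 0" and "sig_eps > 0"
    and "\<forall>i\<in>{1..k}. sig i > 0"
    and "phi_eps > 0" and "\<forall>i\<in>{1..k}. phi i \<ge> 0"
    and "phi_eps + (\<Sum>i=1..k. phi i) = 1"
  shows "(post_mean sig0 phi_eps sig_eps k phi sig Delta has_real_derivative
           (sig0\<^sup>2 / (sig0\<^sup>2 + sig_eps\<^sup>2)) /
           (1 + (\<Sum>i=1..k. (phi i / phi_eps) * (sqrt (sig0\<^sup>2 + sig_eps\<^sup>2) / sig i)
                              * exp (- (Delta i)\<^sup>2 / (2 * (sig i)\<^sup>2))))) (at 0)"
proof -
  define V where "V = sig0^2 + sig_eps^2"
  have V: "V > 0" using assms(1,2) by (simp add: V_def add_pos_pos)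
  define g where "g x = normal_density 0 (sqrt V) x" for x
  define S where "S x = (\<Sum>i=1..k. phi i * normal_density (Delta i) (sig i) x)" for x
  define h where "h x = phi_eps * g x * (sig0^2 / V) / (phi_eps * g x + S x)" for x
  have Snn: "S x \<ge> 0" for x unfolding S_def using assms(5) by (auto intro!: sum_nonneg)
  have gpos: "g x > 0" for x unfolding g_def using V by (simp add: normal_density_pos)
  have den: "phi_eps * g x + S x > 0" for x using Snn gpos assms(4)
    by (simp add: add_pos_nonneg)
  have pm: "post_mean sig0 phi_eps sig_eps k phi sig Delta x = h x * (x - 0)" for x
    unfolding post_mean_def closed_forms[OF assms(1,2)] h_def
    by (simp add: g_def S_def V_def)
  have cont: "isCont h 0"
  proof -
    have "isCont g 0" unfolding g_def by (rule isCont_normal_density)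
    moreover have "isCont S 0" unfolding S_def[abs_def]
      by (intro continuous_intros)
    ultimately show ?thesis unfolding h_def[abs_def] using den[of 0]
      by (intro continuous_intros) auto
  qed
  have ratio: "normal_density (Delta i) (sig i) 0 / g 0
     = sqrt V / sig i * exp (- (Delta i)\<^sup>2 / (2 * (sig i)\<^sup>2))" if "i \<in> {1..k}" for i
  proof -
    have si: "sig i > 0" using assms(3) that by auto
    have "sqrt (2 * pi * (sqrt V)\<^sup>2) / sqrt (2 * pi * (sig i)\<^sup>2) = sqrt V / sig i"
      using V si by (simp add: real_sqrt_mult)
    then show ?thesis unfolding g_def normal_density_def using V si
      by (simp add: field_simps)
  qed
  have h0: "h 0 = (sig0\<^sup>2 / (sig0\<^sup>2 + sig_eps\<^sup>2)) /
           (1 + (\<Sum>i=1..k. (phi i / phi_eps) * (sqrt (sig0\<^sup>2 + sig_eps\<^sup>2) / sig i)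
                              * exp (- (Delta i)\<^sup>2 / (2 * (sig i)\<^sup>2))))"
  proof -
    have "(\<Sum>i=1..k. (phi i / phi_eps) * (sqrt V / sig i) * exp (- (Delta i)\<^sup>2 / (2 * (sig i)\<^sup>2)))
        = S 0 / (phi_eps * g 0)"
      unfolding S_def sum_divide_distrib
      by (rule sum.cong[OF refl]) (use assms(4) gpos[of 0] ratio in \<open>auto simp: field_simps\<close>)
    then have "(\<Sum>i=1..k. (phi i / phi_eps) * (sqrt (sig0\<^sup>2 + sig_eps\<^sup>2) / sig i)
                              * exp (- (Delta i)\<^sup>2 / (2 * (sig i)\<^sup>2))) = S 0 / (phi_eps * g 0)"
      by (simp add: V_def)
    moreover have "h 0 = (sig0\<^sup>2 / V) / (1 + S 0 / (phi_eps * g 0))"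
      unfolding h_def using ratio_alg[of "phi_eps * g 0" "S 0" "sig0\<^sup>2 / V"] assms(4) gpos[of 0] Snn[of 0]
      by simp
    ultimately show ?thesis by (simp add: V_def)
  qed
  have "post_mean sig0 phi_eps sig_eps k phi sig Delta = (\<lambda>x. h x * (x - 0))"
    using pm by auto
  moreover have "((\<lambda>x. h x * (x - 0)) has_real_derivative h 0) (at 0)"
    using CARAT_DERIV cont by fastforce
  ultimately show ?thesis using h0 by simp
qed

end
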